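(* Let $q$ be a prime power, $n$ a positive integer, $L(x)=\sum_{i=0}^{n-1}a_ix^{q^{2i}}$ with $a_i\in\mathbb F_{q^{2n}}$, and let $r=n-\dim\ker(L^*+L)$. Then \[\mathcal S(L)=\sum_{u\in\mathbb F_{q^{2n}}}\psi(\rho_L(u))=(-1)^rq^{2n-r}.\]
   Context: $\mathrm{Tr}$ is the trace $\mathbb F_{q^{2n}}\to\mathbb F_{q^2}$; $\sigma_L(u,v)=\mathrm{Tr}(uL(v^q))$; $\rho_L(u)=\sigma_L(u,u)^q+\sigma_L(u,u)\in\mathbb F_q$. $\psi$ is the canonical additive character of $\mathbb F_q$. $L^*(x)=\sum_{i=0}^{n-1}(a_i^qx)^{q^{2(n-i-1)}}$. Kernels are of the induced $\mathbb F_{q^2}$-linear maps on $\mathbb F_{q^{2n}}$, dimensions over $\mathbb F_{q^2}$. *)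

theory Defs
  imports Complex_Main "HOL-Computational_Algebra.Primes"
begin

text \<open>The ambient field 'a plays the role of F_{q^(2n)}; the subfields F_{q^2}, F_q
  are the fixed points of x ^ (q^2), x ^ q respectively.\<close>

definition linL :: "nat \<Rightarrow> nat \<Rightarrow> (nat \<Rightarrow> 'a::field) \<Rightarrow> 'a \<Rightarrow> 'a" where
  "linL q n a x = (\<Sum>i<n. a i * x ^ (q ^ (2 * i)))"

definition linLstar :: "nat \<Rightarrow> nat \<Rightarrow> (nat \<Rightarrow> 'a::field) \<Rightarrow> 'a \<Rightarrow> 'a" where
  "linLstar q n a x = (\<Sum>i<n. (a i ^ q * x) ^ (q ^ (2 * (n - i - 1))))"

definition trq2 :: "nat \<Rightarrow> nat \<Rightarrow> 'a::field \<Rightarrow> 'a" where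
  "trq2 q n x = (\<Sum>j<n. x ^ (q ^ (2 * j)))"

definition sigmaL :: "nat \<Rightarrow> nat \<Rightarrow> (nat \<Rightarrow> 'a::field) \<Rightarrow> 'a \<Rightarrow> 'a \<Rightarrow> 'a" where
  "sigmaL q n a u v = trq2 q n (u * linL q n a (v ^ q))"

definition rhoL :: "nat \<Rightarrow> nat \<Rightarrow> (nat \<Rightarrow> 'a::field) \<Rightarrow> 'a \<Rightarrow> 'a" where
  "rhoL q n a u = sigmaL q n a u u ^ q + sigmaL q n a u u"

text \<open>Canonical additive character of F_q, q = p^e, p the characteristic:
  psi(c) = exp(2 pi i Tr_{F_q/F_p}(c) / p), the absolute trace being identified
  with an integer k in {0..p-1} via the prime field.\<close>
definition psi :: "nat \<Rightarrow> nat \<Rightarrow> 'a::field \<Rightarrow> complex" where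
  "psi p e c = (let t = (\<Sum>j<e. c ^ (p ^ j));
                    k = (THE k. k < p \<and> (of_nat k :: 'a) = t)
                in cis (2 * pi * real k / real p))"

definition kerLL :: "nat \<Rightarrow> nat \<Rightarrow> (nat \<Rightarrow> 'a::field) \<Rightarrow> 'a set" where
  "kerLL q n a = {x. linLstar q n a x + linL q n a x = 0}"

definition dimq2 :: "nat \<Rightarrow> 'a set \<Rightarrow> nat" where
  "dimq2 q V = (THE d. card V = (q ^ 2) ^ d)"

definition SL :: "nat \<Rightarrow> nat \<Rightarrow> nat \<Rightarrow> nat \<Rightarrow> (nat \<Rightarrow> 'a::{field,finite}) \<Rightarrow> complex" where
  "SL p e q n a = (\<Sum>u\<in>(UNIV::'a set). psi p e (rhoL q n a u))"

end

theory Submission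
  imports Defs "HOL-Computational_Algebra.Polynomial"
begin

lemma ff_power_card:
  fixes x :: "'a::{field,finite}"
  shows "x ^ card (UNIV :: 'a set) = x"
proof (cases "x = 0")
  case False
  have "x * (\<Prod>y\<in>UNIV-{0}. x * y) = x * x ^ (card (UNIV :: 'a set) - 1) * \<Prod>(UNIV-{0})"
    by (simp add: prod.distrib mult_ac)
  also have "x * x ^ (card (UNIV :: 'a set) - 1) = x ^ Suc (card (UNIV :: 'a set) - 1)"
    by (subst power_Suc) auto
  also have "Suc (card (UNIV :: 'a set) - 1) = card (UNIV :: 'a set)"
    using finite_UNIV_card_ge_0[where ?'a = 'a] by simp
  also have "(\<Prod>y\<in>UNIV-{0}. x * y) = (\<Prod>y\<in>UNIV-{0}. y)"
    by (rule prod.reindex_bij_witness[of _ "\<lambda>y. y / x" "\<lambda>y. x * y"]) (use False in auto)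
  finally show ?thesis
    by simp
qed (use finite_UNIV_card_ge_0[where ?'a = 'a] in auto)

lemma root_bound:
  fixes c :: "'i \<Rightarrow> 'a::field"
  assumes "finite J" "inj_on d J" "z \<in> J" "c z \<noteq> 0" "\<And>j. j \<in> J \<Longrightarrow> d j \<le> D"
  shows "card {x. (\<Sum>j\<in>J. c j * x ^ d j) = 0} \<le> D"
proof -
  define P where "P = (\<Sum>j\<in>J. monom (c j) (d j))"
  have ev: "poly P x = (\<Sum>j\<in>J. c j * x ^ d j)" for x
    by (simp add: P_def poly_sum poly_monom)
  have "coeff P (d z) = (\<Sum>j\<in>J. if d j = d z then c j else 0)"
    by (simp add: P_def coeff_sum)
  also have "\<dots> = (\<Sum>j\<in>{z}. c j)"
    using assms(1-3) by (intro sum.mono_neutral_cong_right) (auto simp: inj_on_def)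
  finally have "P \<noteq> 0" using assms(4) by auto
  have "degree P \<le> D" unfolding P_def
    by (rule degree_sum_le[OF assms(1)]) (use degree_monom_le assms(5) le_trans in blast)
  have "card {x. poly P x = 0} \<le> degree P" by (rule card_poly_roots_bound) fact
  with \<open>degree P \<le> D\<close> show ?thesis by (simp add: ev)
qed

lemma sum_shift1:
  fixes f :: "nat \<Rightarrow> 'b::cancel_comm_monoid_add"
  assumes "f m = f 0"
  shows "(\<Sum>j<m. f (Suc j)) = (\<Sum>j<m. f j)"
proof -
  have "(\<Sum>j<m. f (Suc j)) + f 0 = (\<Sum>j<Suc m. f j)"
    by (subst sum.lessThan_Suc_shift) (simp add: add.commute)
  also have "\<dots> = (\<Sum>j<m. f j) + f 0" by (simp add: assms sum.lessThan_Suc)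
  finally show ?thesis by simp
qed

lemma sum_shift_periodic:
  fixes f :: "nat \<Rightarrow> 'b::cancel_comm_monoid_add"
  assumes "\<And>k. f (k + m) = f k"
  shows "(\<Sum>j<m. f (j + s)) = (\<Sum>j<m. f j)"
proof (induction s)
  case (Suc s)
  have "(\<Sum>j<m. f (j + Suc s)) = (\<Sum>j<m. (\<lambda>j. f (j + s)) (Suc j))" by simp
  also have "\<dots> = (\<Sum>j<m. f (j + s))"
    by (rule sum_shift1) (simp add: assms[of s, simplified add.commute] add.commute)
  finally show ?case using Suc by simp
qed simp

lemma free_action_dvd:
  fixes U A :: "'a::field set"
  assumes "finite A" "finite U" "0 \<notin> A" "1 \<in> U" "0 \<notin> U"
    "\<And>x y. x \<in> U \<Longrightarrow> y \<in> U \<Longrightarrow> x * y \<in> U"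
    "\<And>x. x \<in> U \<Longrightarrow> inverse x \<in> U"
    "\<And>l x. l \<in> U \<Longrightarrow> x \<in> A \<Longrightarrow> l * x \<in> A"
  shows "card U dvd card A"
proof -
  note assms = assms(1-4) assms(6-8) assms(5)
  define orb where "orb x = (\<lambda>l. l * x) ` U" for x
  define C where "C = orb ` A"
  have sub: "orb (k * x) \<subseteq> orb x" if "k \<in> U" for k x
  proof
    fix y assume "y \<in> orb (k * x)"
    then obtain l where "l \<in> U" "y = l * (k * x)" by (auto simp: orb_def)
    hence "y = (l * k) * x" "l * k \<in> U" using that assms(5) by (auto simp: mult.assoc)
    thus "y \<in> orb x" by (auto simp: orb_def)
  qed
  have U0: "0 \<notin> U" by fact
  have "card U * card C = card (\<Union>C)"
  proof (rule card_partition)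
    show "finite C" using assms(1) by (simp add: C_def)
    show "finite (\<Union>C)" using assms(2) by (simp add: C_def orb_def assms(1))
    show "card c = card U" if cC: "c \<in> C" for c
    proof -
      obtain x where x: "x \<in> A" "c = orb x" using cC C_def by auto
      have "x \<noteq> 0" using x assms(3) by auto
      have "inj_on (\<lambda>l. l * x) U" using \<open>x \<noteq> 0\<close> by (auto simp: inj_on_def)
      thus ?thesis by (simp add: x orb_def card_image)
    qed
    show "c1 \<inter> c2 = {}" if cc: "c1 \<in> C" "c2 \<in> C" "c1 \<noteq> c2" for c1 c2
    proof (rule ccontr)
      assume "c1 \<inter> c2 \<noteq> {}"
      obtain x1 x2 where x: "x1 \<in> A" "x2 \<in> A" "c1 = orb x1" "c2 = orb x2" using cc C_def by auto
      obtain l1 l2 where l: "l1 \<in> U" "l2 \<in> U" "l1 * x1 = l2 * x2"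
        using \<open>c1 \<inter> c2 \<noteq> {}\<close> x by (auto simp: orb_def)
      have l1: "l1 \<noteq> 0" using l U0 by auto
      have "x1 = (inverse l1 * l2) * x2" using l l1 by (metis mult.assoc inverse_unique divide_inverse nonzero_eq_divide_eq mult.commute)
      hence e: "orb x1 = orb x2"
      proof -
        assume xe: "x1 = (inverse l1 * l2) * x2"
        have m: "inverse l1 * l2 \<in> U" using l assms(5,6) by auto
        have "orb x1 \<subseteq> orb x2"
          using xe m sub by simp
        moreover have x2e: "x2 = (inverse (inverse l1 * l2)) * x1"
        proof -
          have "l2 \<noteq> 0" using l U0 by auto
          thus ?thesis using xe l1 by (simp add: field_simps)
        qed
        have m2: "inverse (inverse l1 * l2) \<in> U" using m assms(6) by blast
        have "orb x2 \<subseteq> orb x1"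
          using x2e m2 sub by metis
        ultimately show ?thesis by blast
      qed
      thus False using x cc by simp
    qed
  qed
  moreover have "\<Union>C = A"
  proof
    show "\<Union>C \<subseteq> A" using assms(7) by (auto simp: C_def orb_def)
    show "A \<subseteq> \<Union>C"
    proof
      fix x assume "x \<in> A"
      hence "x \<in> orb x" using assms(4) by (auto simp: orb_def intro!: image_eqI[of _ _ 1])
      thus "x \<in> \<Union>C" using \<open>x \<in> A\<close> by (auto simp: C_def)
    qed
  qed
  ultimately show ?thesis by (metis dvd_triv_left)
qed

lemma card_pow_eq1_le:
  fixes y :: "'a::field"
  assumes "m > 0"
  shows "card {x::'a. x ^ m = y} \<le> m"
proof -
  have "card {x::'a. (\<Sum>j\<in>{0::nat,1}. (if j = 0 then 1 else -y) * x ^ (if j = 0 then m else 0)) = 0} \<le> m"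
    by (rule root_bound[where z=0]) (use assms in \<open>auto simp: inj_on_def\<close>)
  moreover have "{x::'a. (\<Sum>j\<in>{0::nat,1}. (if j = 0 then 1 else -y) * x ^ (if j = 0 then m else 0)) = 0} = {x. x ^ m = y}"
    by auto
  ultimately show ?thesis by simp
qed

lemma ff_card_ge2: "card (UNIV :: 'a::{field,finite} set) \<ge> 2"
proof -
  have "{0::'a, 1} \<subseteq> UNIV" by auto
  hence "card {0::'a, 1} \<le> card (UNIV :: 'a set)" by (intro card_mono) auto
  thus ?thesis by simp
qed

lemma ff_pow_Nm1:
  fixes x :: "'a::{field,finite}"
  assumes "x \<noteq> 0"
  shows "x ^ (card (UNIV :: 'a set) - 1) = 1"
proof -
  have "x * x ^ (card (UNIV :: 'a set) - 1) = x * 1"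
    using ff_power_card[of x] ff_card_ge2[where 'a='a]
    by (metis One_nat_def Suc_pred less_le_trans mult.right_neutral pos2 power_Suc)
  thus ?thesis using assms by simp
qed

lemma card_roots_unity_ff:
  assumes "m > 0" "m dvd card (UNIV :: 'a::{field,finite} set) - 1"
  shows "card {x::'a. x ^ m = 1} = m"
proof (rule antisym)
  show "card {x::'a. x ^ m = 1} \<le> m" by (rule card_pow_eq1_le) fact
  obtain k where k: "card (UNIV :: 'a set) - 1 = m * k" using assms(2) by blast
  have "k > 0" using k ff_card_ge2[where 'a='a] by (cases k) auto
  define G where "G = {x::'a. (\<Sum>i\<in>{..<k}. 1 * x ^ (m * i)) = 0}"
  have G: "card G \<le> m * (k - 1)" unfolding G_def
    by (rule root_bound[where z=0]) (use assms \<open>k > 0\<close> in \<open>auto simp: inj_on_def\<close>)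
  have "UNIV - {0} \<subseteq> {x::'a. x ^ m = 1} \<union> G"
  proof
    fix x :: 'a assume "x \<in> UNIV - {0}"
    hence "(x ^ m) ^ k - 1 = 0" using ff_pow_Nm1[of x] k by (simp add: power_mult)
    hence "(x ^ m - 1) * (\<Sum>i<k. (x ^ m) ^ i) = 0" by (simp add: power_diff_1_eq)
    thus "x \<in> {x::'a. x ^ m = 1} \<union> G" by (auto simp: G_def power_mult)
  qed
  hence "card (UNIV - {0::'a}) \<le> card ({x::'a. x ^ m = 1} \<union> G)" by (intro card_mono) auto
  also have "\<dots> \<le> card {x::'a. x ^ m = 1} + card G" by (rule card_Un_le)
  finally have "m * k \<le> card {x::'a. x ^ m = 1} + m * (k - 1)"
    using k G by (simp add: card_Diff_singleton)
  moreover have "m * k = m + m * (k - 1)" using \<open>k > 0\<close> by (cases k) auto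
  ultimately show "m \<le> card {x::'a. x ^ m = 1}" by linarith
qed

definition ksub :: "'a::field set \<Rightarrow> 'a set \<Rightarrow> bool" where
  "ksub K V \<longleftrightarrow> 0 \<in> V \<and> (\<forall>x\<in>V. \<forall>y\<in>V. x + y \<in> V) \<and> (\<forall>l\<in>K. \<forall>x\<in>V. l * x \<in> V)"

lemma subspace_card_pow:
  fixes K W :: "'a::field set"
  assumes fin: "finite W" and W: "ksub K W"
    and K: "0 \<in> K" "1 \<in> K" "\<And>x y. x \<in> K \<Longrightarrow> y \<in> K \<Longrightarrow> x + y \<in> K"
      "\<And>x y. x \<in> K \<Longrightarrow> y \<in> K \<Longrightarrow> x * y \<in> K"
      "\<And>x. x \<in> K \<Longrightarrow> -x \<in> K" "\<And>x. x \<in> K \<Longrightarrow> inverse x \<in> K"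
      "finite K"
  shows "\<exists>k. card W = card K ^ k"
proof -
  have main: "ksub K U \<Longrightarrow> U \<subseteq> W \<Longrightarrow> \<exists>k. card W = card K ^ k * card U" for U
  proof (induction "card W - card U" arbitrary: U rule: less_induct)
    case (less U)
    show ?case
    proof (cases "U = W")
      case True thus ?thesis by (intro exI[of _ 0]) simp
    next
      case False
      then obtain w where w: "w \<in> W" "w \<notin> U" using less.prems by blast
      have m1: "-1 \<in> K" using K by blast
      have Uadd: "x + y \<in> U" if "x \<in> U" "y \<in> U" for x y
        using less.prems(1) that unfolding ksub_def by blast
      have Usm: "l * x \<in> U" if "l \<in> K" "x \<in> U" for l x
        using less.prems(1) that unfolding ksub_def by blast
      have Usub: "u' + (-1) * u \<in> U" if "u \<in> U" "u' \<in> U" for u u'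
        using Uadd Usm that m1 by blast
      define U' where "U' = (\<lambda>(u,l). u + l * w) ` (U \<times> K)"
      have inj: "inj_on (\<lambda>(u,l). u + l * w) (U \<times> K)"
      proof (rule inj_onI, clarsimp)
        fix u l u' l' assume h: "u \<in> U" "l \<in> K" "u' \<in> U" "l' \<in> K" "u + l * w = u' + l' * w"
        have "l = l'"
        proof (rule ccontr)
          assume "l \<noteq> l'"
          hence ne: "l - l' \<noteq> 0" by simp
          have e1: "(l - l') * w = u' + (-1) * u" using h(5) by (simp add: algebra_simps)
          have "w = inverse (l - l') * ((l - l') * w)" using ne by simp
          hence e2: "w = inverse (l - l') * (u' + (-1) * u)" using e1 by simp
          have "l - l' = l + - l'" by simp
          hence i: "inverse (l - l') \<in> K" using h K by metis
          have u: "u' + (-1) * u \<in> U" using Usub h by blast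
          have "w \<in> U" using Usm[OF i u] e2 by simp
          thus False using w by blast
        qed
        thus "u = u' \<and> l = l'" using h by simp
      qed
      have finU: "finite U" using less.prems(2) fin finite_subset by blast
      have cardU': "card U' = card U * card K"
        unfolding U'_def using card_image[OF inj] finU K(7) by (simp add: card_cartesian_product)
      have U'W: "U' \<subseteq> W"
      proof
        fix x assume "x \<in> U'"
        then obtain u l where "u \<in> U" "l \<in> K" "x = u + l * w" by (auto simp: U'_def)
        thus "x \<in> W" using W less.prems(2) w(1) unfolding ksub_def by blast
      qed
      have sU': "ksub K U'"
        unfolding ksub_def
      proof (intro conjI ballI)
        show "0 \<in> U'" using less.prems(1) K(1) unfolding ksub_def U'_def
          by (auto intro!: image_eqI[of _ _ "(0,0)"])
        fix x y assume "x \<in> U'" "y \<in> U'"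
        then obtain u l u' l' where h: "u \<in> U" "l \<in> K" "x = u + l * w" "u' \<in> U" "l' \<in> K" "y = u' + l' * w"
          by (auto simp: U'_def)
        have "x + y = (u + u') + (l + l') * w" using h by (simp add: algebra_simps)
        moreover have "u + u' \<in> U" "l + l' \<in> K" using h less.prems(1) K unfolding ksub_def by auto
        ultimately show "x + y \<in> U'" unfolding U'_def by (auto intro!: image_eqI[of _ _ "(u+u', l+l')"])
      next
        fix m x assume "m \<in> K" "x \<in> U'"
        then obtain u l where h: "u \<in> U" "l \<in> K" "x = u + l * w" by (auto simp: U'_def)
        have "m * x = m * u + (m * l) * w" using h by (simp add: algebra_simps)
        moreover have "m * u \<in> U" "m * l \<in> K" using h \<open>m \<in> K\<close> less.prems(1) K unfolding ksub_def by auto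
        ultimately show "m * x \<in> U'" unfolding U'_def by (auto intro!: image_eqI[of _ _ "(m*u, m*l)"])
      qed
      have "U \<subseteq> U'" using K(1) unfolding U'_def by (auto intro!: image_eqI[of _ _ "(u,0)" for u])
      moreover have "w \<in> U'" using K(2) less.prems(1) unfolding U'_def ksub_def by (auto intro!: image_eqI[of _ _ "(0,1)"])
      ultimately have "U \<subset> U'" using w by blast
      hence "card U < card U'" using U'W fin finite_subset psubset_card_mono by blast
      moreover have "card U' \<le> card W" using U'W fin by (simp add: card_mono)
      ultimately have "card W - card U' < card W - card U" by linarith
      from less.hyps[OF this sU' U'W] obtain k where "card W = card K ^ k * card U'" by blast
      hence "card W = card K ^ Suc k * card U" using cardU' by (simp add: mult_ac)
      thus ?thesis by blast
    qed
  qed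
  have "ksub K {0}" using K(1) unfolding ksub_def by auto
  moreover have "{0} \<subseteq> W" using W unfolding ksub_def by auto
  ultimately obtain k where "card W = card K ^ k * card {0::'a}" using main by blast
  thus ?thesis by auto
qed

lemma nat_pow_minus1_dvd:
  fixes x k :: nat
  assumes "x \<ge> 1"
  shows "(x - 1) dvd (x ^ k - 1)"
proof -
  have "int (x ^ k - 1) = int x ^ k - 1" using assms by (simp add: of_nat_diff)
  also have "\<dots> = (int x - 1) * (\<Sum>i<k. int x ^ i)" by (rule power_diff_1_eq)
  also have "int x - 1 = int (x - 1)" using assms by simp
  finally have "int (x - 1) dvd int (x ^ k - 1)" by (metis dvd_triv_left)
  thus ?thesis by simp
qed

lemma card_fix_le:
  fixes m :: nat
  assumes "m > 1"
  shows "card {x::'a::field. x ^ m = x} \<le> m"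
proof -
  have "card {x::'a. (\<Sum>j\<in>{0::nat,1}. (if j = 0 then 1 else -1) * x ^ (if j = 0 then m else 1)) = 0} \<le> m"
    by (rule root_bound[where z=0]) (use assms in \<open>auto simp: inj_on_def\<close>)
  moreover have "{x::'a. (\<Sum>j\<in>{0::nat,1}. (if j = 0 then 1 else -1) * x ^ (if j = 0 then m else 1)) = 0} = {x. x ^ m = x}"
    by auto
  ultimately show ?thesis by simp
qed

locale setting =
  fixes p e q n :: nat and a :: "nat \<Rightarrow> 'a::{field,finite}"
  assumes p: "prime p" and e: "e > 0" and qpe: "q = p ^ e" and ch: "CHAR('a) = p"
    and cardF: "card (UNIV :: 'a set) = q ^ (2 * n)" and npos: "n > 0"
begin

lemma p2: "p \<ge> 2" using p prime_ge_2_nat by blast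
lemma q2: "q \<ge> 2"
proof -
  have "p ^ 1 \<le> p ^ e" using e p2 by (intro power_increasing) auto
  thus ?thesis using p2 qpe by simp
qed

lemma powp_add: "(x + y :: 'a) ^ (p ^ k) = x ^ (p ^ k) + y ^ (p ^ k)"
  by (rule freshmans_dream') (use p ch in auto)

lemma powp_sum: "(sum f A :: 'a) ^ (p ^ k) = sum (\<lambda>i. f i ^ (p ^ k)) A"
  by (rule freshmans_dream_sum') (use p ch in auto)

lemma powq_eq: "q ^ k = p ^ (e * k)" by (simp add: qpe power_mult)

lemma powq_add: "(x + y :: 'a) ^ (q ^ k) = x ^ (q ^ k) + y ^ (q ^ k)"
  unfolding powq_eq by (rule powp_add)

lemma powq_sum: "(sum f A :: 'a) ^ (q ^ k) = sum (\<lambda>i. f i ^ (q ^ k)) A"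
  unfolding powq_eq by (rule powp_sum)

lemma powq_neg: "(- x :: 'a) ^ (q ^ k) = - (x ^ (q ^ k))"
proof -
  have "0 = (x + - x) ^ (q ^ k)" using q2 by simp
  also have "\<dots> = x ^ (q ^ k) + (- x) ^ (q ^ k)" by (rule powq_add)
  finally show ?thesis by (simp add: eq_neg_iff_add_eq_0 add.commute)
qed

lemma powq_diff: "(x - y :: 'a) ^ (q ^ k) = x ^ (q ^ k) - y ^ (q ^ k)"
  using powq_add[of x "-y" k] powq_neg[of y k] by simp

lemma powq1_add: "(x + y :: 'a) ^ q = x ^ q + y ^ q"
  using powq_add[of x y 1] by simp

lemma powq_powq: "((x :: 'a) ^ (q ^ i)) ^ (q ^ j) = x ^ (q ^ (i + j))"
  by (simp add: power_mult[symmetric] power_add)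

lemma pow_period: "(x :: 'a) ^ (q ^ (2 * n + m)) = x ^ (q ^ m)"
proof -
  have "x ^ (q ^ (2 * n)) = x" using ff_power_card[of x] cardF by simp
  have "x ^ (q ^ (2 * n + m)) = (x ^ (q ^ (2 * n))) ^ (q ^ m)" by (simp add: powq_powq)
  thus ?thesis using \<open>x ^ (q ^ (2 * n)) = x\<close> by simp
qed

lemma pow_period0: "(x :: 'a) ^ (q ^ (2 * n)) = x"
  using pow_period[of x 0] by simp

lemma powq_inj: "(x :: 'a) ^ (q ^ k) = y ^ (q ^ k) \<Longrightarrow> x = y"
proof -
  assume "x ^ (q ^ k) = y ^ (q ^ k)"
  hence "(x - y) ^ (q ^ k) = 0" by (simp add: powq_diff)
  thus "x = y" using q2 by simp
qed

definition Fix :: "nat \<Rightarrow> 'a set" where "Fix k = {x. x ^ (q ^ k) = x}"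

lemma Fix_0: "0 \<in> Fix k" and Fix_1: "1 \<in> Fix k"
  using q2 by (auto simp: Fix_def)

lemma Fix_add: "x \<in> Fix k \<Longrightarrow> y \<in> Fix k \<Longrightarrow> x + y \<in> Fix k"
  by (simp add: Fix_def powq_add)
lemma Fix_neg: "x \<in> Fix k \<Longrightarrow> - x \<in> Fix k"
  by (simp add: Fix_def powq_neg)
lemma Fix_diff: "x \<in> Fix k \<Longrightarrow> y \<in> Fix k \<Longrightarrow> x - y \<in> Fix k"
  by (simp add: Fix_def powq_diff)
lemma Fix_mult: "x \<in> Fix k \<Longrightarrow> y \<in> Fix k \<Longrightarrow> x * y \<in> Fix k"
  by (simp add: Fix_def power_mult_distrib)
lemma Fix_inverse: "x \<in> Fix k \<Longrightarrow> inverse x \<in> Fix k"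
  by (simp add: Fix_def power_inverse)
lemma Fix_divide: "x \<in> Fix k \<Longrightarrow> y \<in> Fix k \<Longrightarrow> x / y \<in> Fix k"
  by (simp add: Fix_def power_divide)
lemma Fix_iter: "x \<in> Fix k \<Longrightarrow> x ^ (q ^ (k * j)) = x"
proof (induction j)
  case (Suc j)
  have "x ^ (q ^ (k * Suc j)) = (x ^ (q ^ (k * j))) ^ (q ^ k)"
    by (simp only: powq_powq) (simp add: add.commute)
  thus ?case using Suc by (simp add: Fix_def)
qed simp

lemma Fix1_sub2: "Fix 1 \<subseteq> Fix 2"
  using Fix_iter[of _ 1 2] by (auto simp: Fix_def)

lemma Fix_pow: "x \<in> Fix k \<Longrightarrow> x ^ (q ^ j) \<in> Fix k"
proof -
  assume "x \<in> Fix k"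
  hence "x ^ (q ^ k) = x" by (simp add: Fix_def)
  have "(x ^ (q ^ j)) ^ (q ^ k) = (x ^ (q ^ k)) ^ (q ^ j)" by (simp only: powq_powq add.commute)
  thus ?thesis using \<open>x ^ (q ^ k) = x\<close> by (simp add: Fix_def)
qed

end

context setting
begin

lemma Fix_alt: "k > 0 \<Longrightarrow> Fix k = insert 0 {x. x ^ (q ^ k - 1) = 1}"
proof -
  assume "k > 0"
  hence "q ^ k \<ge> 1" using q2 by simp
  have "x ^ (q ^ k) = x \<longleftrightarrow> x = 0 \<or> x ^ (q ^ k - 1) = 1" for x :: 'a
  proof -
    have "x ^ (q ^ k) = x * x ^ (q ^ k - 1)"
      using \<open>q ^ k \<ge> 1\<close> by (metis Suc_diff_1 le_less_trans less_one power_Suc not_less nat_less_le zero_less_one)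
    thus ?thesis by auto
  qed
  thus ?thesis by (auto simp: Fix_def)
qed

lemma card_Fix:
  assumes "k > 0" "(q ^ k - 1) dvd (q ^ (2 * n) - 1)"
  shows "card (Fix k) = q ^ k"
proof -
  have qk: "q ^ k \<ge> 2" using q2 assms(1)
    by (metis le_trans power_increasing self_le_power Suc_leI power_one_right zero_less_Suc
        One_nat_def le_numeral_extra(4) not_gr0 power_0 pos2)
  have c: "card {x::'a. x ^ (q ^ k - 1) = 1} = q ^ k - 1"
    by (rule card_roots_unity_ff) (use qk assms(2) cardF in auto)
  have "q ^ k - 1 \<noteq> 0" using qk by simp
  hence "(0::'a) ^ (q ^ k - 1) = 0" by (simp add: power_0_left)
  hence "0 \<notin> {x::'a. x ^ (q ^ k - 1) = 1}" by (metis (mono_tags) mem_Collect_eq zero_neq_one)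
  hence "card (Fix k) = Suc (q ^ k - 1)" using Fix_alt[OF assms(1)] c by simp
  thus ?thesis using qk by simp
qed

lemma dvd_Q1: "k dvd 2 * n \<Longrightarrow> (q ^ k - 1) dvd (q ^ (2 * n) - 1)"
proof -
  assume "k dvd 2 * n"
  then obtain j where "2 * n = k * j" by blast
  hence "q ^ (2 * n) = (q ^ k) ^ j" by (simp add: power_mult)
  thus ?thesis using q2 nat_pow_minus1_dvd[of "q ^ k" j] by simp
qed

lemma card_K1: "card (Fix 1) = q"
  using card_Fix[of 1] dvd_Q1[of 1] by simp

lemma card_K2: "card (Fix 2) = q ^ 2"
  using card_Fix[of 2] dvd_Q1[of 2] by simp

definition U :: "'a set" where "U = {x. x ^ (q + 1) = 1}"

lemma card_U: "card U = q + 1"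
proof -
  have "(q + 1) dvd (q ^ 2 - 1)"
  proof -
    obtain r where r: "q = r + 1" using q2 by (metis add.commute le_add_diff_inverse2 le_trans one_le_numeral)
    have "q ^ 2 - 1 = (q + 1) * (q - 1)" unfolding r by (simp add: power2_eq_square algebra_simps)
    thus ?thesis by (metis dvd_triv_left)
  qed
  also have "(q ^ 2 - 1) dvd (q ^ (2 * n) - 1)" by (rule dvd_Q1) simp
  finally show ?thesis unfolding U_def
    by (intro card_roots_unity_ff) (use cardF in auto)
qed

lemma U_sub: "U \<subseteq> Fix 2"
proof
  fix x assume "x \<in> U"
  hence x: "x ^ (q + 1) = 1" by (simp add: U_def)
  obtain r where r: "q = r + 1" using q2 by (metis add.commute le_add_diff_inverse2 le_trans one_le_numeral)
  have "q ^ 2 = (q + 1) * (q - 1) + 1" unfolding r by (simp add: power2_eq_square algebra_simps)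
  hence "x ^ (q ^ 2) = (x ^ (q + 1)) ^ (q - 1) * x" by (simp only: power_add power_mult power_one_right)
  thus "x \<in> Fix 2" using x by (simp add: Fix_def)
qed

lemma U_0: "0 \<notin> U" and U_1: "1 \<in> U"
  by (auto simp: U_def)
lemma U_mult: "x \<in> U \<Longrightarrow> y \<in> U \<Longrightarrow> x * y \<in> U"
  unfolding U_def using power_mult_distrib[of x y "q+1"] by (simp del: power_Suc)
lemma U_inverse: "x \<in> U \<Longrightarrow> inverse x \<in> U"
  unfolding U_def using power_inverse[of x "q+1"] by (simp del: power_Suc)

end

context setting
begin

lemma ofnat_inj:
  assumes "i < p" "j < p" "(of_nat i :: 'a) = of_nat j"
  shows "i = j"
proof -
  have *: "i = j" if "i \<le> j" "i < p" "j < p" "(of_nat i :: 'a) = of_nat j" for i j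
  proof -
    have "(of_nat (j - i) :: 'a) = 0" using that by (simp add: of_nat_diff)
    hence "p dvd (j - i)" using of_nat_eq_0_iff_char_dvd ch by metis
    moreover have "j - i < p" using that by simp
    ultimately have "j - i = 0" using dvd_imp_le by (metis not_less zero_less_iff_neq_zero)
    thus ?thesis using that by simp
  qed
  show ?thesis using *[of i j] *[of j i] assms by (cases "i \<le> j") auto
qed

lemma ofnat_powp: "(of_nat k :: 'a) ^ p = of_nat k"
proof (induction k)
  case 0 thus ?case using p2 by simp
next
  case (Suc k)
  have "(of_nat k + 1 :: 'a) ^ (p ^ 1) = of_nat k ^ (p ^ 1) + 1 ^ (p ^ 1)" by (rule powp_add)
  thus ?case using Suc by (simp add: add.commute)
qed

lemma P_eq: "{x::'a. x ^ p = x} = of_nat ` {..<p}"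
proof -
  have sub: "of_nat ` {..<p} \<subseteq> {x::'a. x ^ p = x}" using ofnat_powp by auto
  have inj: "inj_on (of_nat :: nat \<Rightarrow> 'a) {..<p}" using ofnat_inj by (auto simp: inj_on_def)
  have "card {x::'a. x ^ p = x} \<le> p" by (rule card_fix_le) (use p2 in auto)
  also have "p = card (of_nat ` {..<p} :: 'a set)" using card_image[OF inj] by simp
  finally have le: "card {x::'a. x ^ p = x} \<le> card (of_nat ` {..<p} :: 'a set)" .
  have "of_nat ` {..<p} = {x::'a. x ^ p = x}"
    by (rule card_seteq[OF _ sub le]) simp
  thus ?thesis by simp
qed

definition idx :: "'a \<Rightarrow> nat" where "idx x = (THE k. k < p \<and> of_nat k = x)"
definition chi :: "'a \<Rightarrow> complex" where "chi x = cis (2 * pi * real (idx x) / real p)"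
definition tabs :: "'a \<Rightarrow> 'a" where "tabs c = (\<Sum>j<e. c ^ (p ^ j))"

lemma idx_eq: "k < p \<Longrightarrow> of_nat k = x \<Longrightarrow> idx x = k"
  unfolding idx_def using ofnat_inj by (intro the_equality) auto

lemma idx: assumes "x ^ p = x" shows "idx x < p" "of_nat (idx x) = x"
proof -
  have "x \<in> {x::'a. x ^ p = x}" using assms by simp
  hence "x \<in> of_nat ` {..<p}" by (simp only: P_eq)
  then obtain k where k: "k < p" "x = of_nat k" by blast
  have "idx x = k" using idx_eq[OF k(1) k(2)[symmetric]] .
  thus "idx x < p" "of_nat (idx x) = x" using k by auto
qed

lemma chi_0: "chi 0 = 1"
proof -
  have "idx 0 = 0" using idx_eq[of 0 0] p2 by simp
  thus ?thesis by (simp add: chi_def)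
qed

lemma chi_add:
  assumes "x ^ p = x" "y ^ p = y"
  shows "chi (x + y) = chi x * chi y"
proof -
  define i j where "i = idx x" and "j = idx y"
  have ij: "i < p" "j < p" "of_nat i = x" "of_nat j = y" using idx assms by (auto simp: i_def j_def)
  have dm: "i + j = (i + j) mod p + p * ((i + j) div p)" by simp
  have "(of_nat ((i + j) mod p) :: 'a) = of_nat (i + j)"
  proof -
    have "(of_nat (i + j) :: 'a) = of_nat ((i + j) mod p) + of_nat p * of_nat ((i + j) div p)"
      by (subst dm) (simp only: of_nat_add of_nat_mult)
    also have "(of_nat p :: 'a) = 0" by (metis ch of_nat_CHAR)
    finally show ?thesis by simp
  qed
  hence "idx (x + y) = (i + j) mod p" using ij p2 by (intro idx_eq) auto
  hence "chi (x + y) = cis (2 * pi * real ((i + j) mod p) / real p)" by (simp add: chi_def)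
  also have "\<dots> = cis (2 * pi * real ((i + j) mod p) / real p) * cis (2 * pi * real ((i + j) div p))"
    by (simp add: cis_multiple_2pi)
  also have "\<dots> = cis (2 * pi * real (i + j) / real p)"
  proof -
    have "real (i + j) = real ((i + j) mod p + p * ((i + j) div p))"
      using dm by presburger
    hence "real (i + j) = real ((i + j) mod p) + real p * real ((i + j) div p)"
      by (simp only: of_nat_add of_nat_mult)
    hence "2 * pi * real (i + j) / real p = 2 * pi * real ((i + j) mod p) / real p + 2 * pi * real ((i + j) div p)"
      using p2 by (simp add: field_simps)
    thus ?thesis by (simp only: cis_mult)
  qed
  also have "\<dots> = chi x * chi y"
    by (simp add: chi_def i_def[symmetric] j_def[symmetric] cis_mult add_divide_distrib distrib_left)
  finally show ?thesis .
qed

lemma chi_ne1: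
  assumes "x ^ p = x" "x \<noteq> 0"
  shows "chi x \<noteq> 1"
proof
  assume h: "chi x = 1"
  define k where "k = idx x"
  have k: "k < p" "of_nat k = x" using idx assms by (auto simp: k_def)
  have "k \<noteq> 0" using k(2) assms(2) by (metis of_nat_0)
  have "cos (2 * pi * real k / real p) = 1" using h
    by (simp add: chi_def k_def[symmetric] cis.ctr complex_eq_iff)
  then obtain m :: int where m: "2 * pi * real k / real p = real_of_int m * 2 * pi" using cos_one_2pi_int by blast
  hence "real k = m * real p" using p2 by (simp add: field_simps)
  hence "int k = m * int p" by (metis of_int_eq_iff of_int_mult of_int_of_nat_eq)
  moreover have "0 < int k" "int k < int p" using \<open>k \<noteq> 0\<close> k by auto
  ultimately show False
  proof (cases "m \<le> 0")
    case True
    hence "m * int p \<le> 0" by (simp add: mult_nonpos_nonneg)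
    thus False using \<open>int k = m * int p\<close> \<open>0 < int k\<close> by linarith
  next
    case False
    hence "1 * int p \<le> m * int p" by (intro mult_right_mono) auto
    thus False using \<open>int k = m * int p\<close> \<open>int k < int p\<close> by linarith
  qed
qed

lemma tabs_powp: "c \<in> Fix 1 \<Longrightarrow> tabs c ^ p = tabs c"
proof -
  assume c: "c \<in> Fix 1"
  have "tabs c ^ (p ^ 1) = (\<Sum>j<e. (c ^ (p ^ j)) ^ (p ^ 1))" unfolding tabs_def by (rule powp_sum)
  also have "\<dots> = (\<Sum>j<e. c ^ (p ^ Suc j))" by (simp add: power_mult[symmetric] mult.commute)
  also have "\<dots> = (\<Sum>j<e. c ^ (p ^ j))"
  proof (rule sum_shift1[of "\<lambda>j. c ^ (p ^ j)"])
    have "c ^ q = c" using c by (simp add: Fix_def)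
    thus "c ^ (p ^ e) = c ^ (p ^ 0)" using qpe by simp
  qed
  finally show ?thesis by (simp add: tabs_def)
qed

lemma tabs_add: "tabs (x + y) = tabs x + tabs y"
  by (simp add: tabs_def powp_add sum.distrib)

lemma psi_eq: "psi p e c = chi (tabs c)"
  by (simp add: psi_def chi_def idx_def tabs_def Let_def)

lemma psi_add: "c \<in> Fix 1 \<Longrightarrow> d \<in> Fix 1 \<Longrightarrow> psi p e (c + d) = psi p e c * psi p e d"
  by (simp add: psi_eq tabs_add chi_add tabs_powp)

lemma psi_0: "psi p e (0::'a) = 1"
proof -
  have "tabs 0 = 0" unfolding tabs_def by (rule sum.neutral) (use p2 in simp)
  thus ?thesis using psi_eq[of 0] chi_0 by simp
qed

lemma tabs_nonzero: "\<exists>c\<in>Fix 1. tabs c \<noteq> 0"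
proof (rule ccontr)
  assume "\<not> ?thesis"
  hence sub: "Fix 1 \<subseteq> {c. (\<Sum>j\<in>{..<e}. 1 * c ^ (p ^ j)) = 0}" by (auto simp: tabs_def)
  have inj: "inj_on (\<lambda>j. p ^ j) {..<e}" using p2 by (auto simp: inj_on_def)
  have "card {c::'a. (\<Sum>j\<in>{..<e}. 1 * c ^ (p ^ j)) = 0} \<le> p ^ (e - 1)"
    by (rule root_bound[where z=0]) (use e inj p2 in \<open>auto intro!: power_increasing\<close>)
  moreover have "card (Fix 1) \<le> card {c::'a. (\<Sum>j\<in>{..<e}. 1 * c ^ (p ^ j)) = 0}"
    using sub by (intro card_mono) auto
  moreover have "p ^ (e - 1) < p ^ e" using e p2 by (intro power_strict_increasing) auto
  ultimately show False using card_K1 qpe by simp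
qed

lemma psi_nontriv: "\<exists>c\<in>Fix 1. psi p e c \<noteq> 1"
  using tabs_nonzero chi_ne1 tabs_powp psi_eq by metis

lemma sum_psi_K1: "(\<Sum>c\<in>Fix 1. psi p e c) = 0"
proof -
  obtain c0 where c0: "c0 \<in> Fix 1" "psi p e c0 \<noteq> 1" using psi_nontriv by blast
  have "(\<Sum>c\<in>Fix 1. psi p e c) = (\<Sum>c\<in>Fix 1. psi p e (c0 + c))"
    by (rule sum.reindex_bij_witness[of _ "\<lambda>c. c0 + c" "\<lambda>c. c - c0"])
      (use c0 in \<open>auto intro: Fix_add Fix_diff\<close>)
  also have "\<dots> = psi p e c0 * (\<Sum>c\<in>Fix 1. psi p e c)"
    unfolding sum_distrib_left by (rule sum.cong[OF refl], rule psi_add[OF c0(1)], assumption)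
  finally have "(1 - psi p e c0) * (\<Sum>c\<in>Fix 1. psi p e c) = 0" by (simp add: algebra_simps)
  thus ?thesis using c0 by simp
qed

lemma orth:
  fixes f :: "'a \<Rightarrow> 'a"
  assumes inK: "\<And>v. f v \<in> Fix 1" and add: "\<And>x y. f (x + y) = f x + f y"
    and lin: "\<And>l v. l \<in> Fix 1 \<Longrightarrow> f (l * v) = l * f v" and nz: "\<exists>v. f v \<noteq> 0"
  shows "(\<Sum>v\<in>UNIV. psi p e (f v)) = 0"
proof -
  obtain v1 where v1: "f v1 \<noteq> 0" using nz by blast
  obtain c0 where c0: "c0 \<in> Fix 1" "psi p e c0 \<noteq> 1" using psi_nontriv by blast
  define v0 where "v0 = (c0 / f v1) * v1"
  have "c0 / f v1 \<in> Fix 1" using c0 inK by (intro Fix_divide) auto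
  hence "f v0 = (c0 / f v1) * f v1" unfolding v0_def by (rule lin)
  hence fv0: "f v0 = c0" using v1 by simp
  have "(\<Sum>v\<in>UNIV. psi p e (f v)) = (\<Sum>v\<in>UNIV. psi p e (f (v0 + v)))"
    by (rule sum.reindex_bij_witness[of _ "\<lambda>v. v0 + v" "\<lambda>v. v - v0"]) auto
  also have "\<dots> = psi p e c0 * (\<Sum>v\<in>UNIV. psi p e (f v))"
    unfolding sum_distrib_left add fv0 by (rule sum.cong[OF refl], rule psi_add[OF c0(1) inK])
  finally have "(1 - psi p e c0) * (\<Sum>v\<in>UNIV. psi p e (f v)) = 0" by (simp add: algebra_simps)
  thus ?thesis using c0 by simp
qed

end

context setting
begin

abbreviation Tr :: "'a \<Rightarrow> 'a" where "Tr \<equiv> trq2 q n"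
abbreviation "L \<equiv> linL q n a"
abbreviation "Ls \<equiv> linLstar q n a"
abbreviation "sig \<equiv> sigmaL q n a"
abbreviation "rho \<equiv> rhoL q n a"
definition M :: "'a \<Rightarrow> 'a" where "M x = Ls x + L x"
definition T :: "'a \<Rightarrow> 'a" where "T z = z ^ q + z"

lemma powq1: "(x::'a) ^ q = x ^ (q ^ 1)" by simp

lemma Tr_add: "Tr (x + y) = Tr x + Tr y"
  by (simp add: trq2_def powq_add sum.distrib)

lemma Tr_smul: "l \<in> Fix 2 \<Longrightarrow> Tr (l * x) = l * Tr x"
  by (simp add: trq2_def power_mult_distrib Fix_iter sum_distrib_left)

lemma Tr_K2: "Tr x \<in> Fix 2"
proof -
  have "Tr x ^ (q ^ 2) = (\<Sum>j<n. (x ^ (q ^ (2 * j))) ^ (q ^ 2))" unfolding trq2_def by (rule powq_sum)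
  also have "\<dots> = (\<Sum>j<n. x ^ (q ^ (2 * Suc j)))" by (simp add: powq_powq)
  also have "\<dots> = (\<Sum>j<n. x ^ (q ^ (2 * j)))"
    by (rule sum_shift1[of "\<lambda>j. x ^ (q ^ (2 * j))"]) (simp add: pow_period0)
  finally show ?thesis by (simp add: Fix_def trq2_def)
qed

lemma Tr_nonzero: "\<exists>v. Tr v \<noteq> 0"
proof (rule ccontr)
  assume "\<not> ?thesis"
  hence sub: "UNIV \<subseteq> {c::'a. (\<Sum>j\<in>{..<n}. 1 * c ^ (q ^ (2 * j))) = 0}" by (auto simp: trq2_def)
  have inj: "inj_on (\<lambda>j. q ^ (2 * j)) {..<n}" using q2 by (auto simp: inj_on_def)
  have "card {c::'a. (\<Sum>j\<in>{..<n}. 1 * c ^ (q ^ (2 * j))) = 0} \<le> q ^ (2 * (n - 1))"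
    by (rule root_bound[where z=0]) (use npos inj q2 in \<open>auto intro!: power_increasing\<close>)
  moreover have "card (UNIV :: 'a set) \<le> card {c::'a. (\<Sum>j\<in>{..<n}. 1 * c ^ (q ^ (2 * j))) = 0}"
    using sub by (intro card_mono) auto
  moreover have "q ^ (2 * (n - 1)) < q ^ (2 * n)" using npos q2 by (intro power_strict_increasing) auto
  ultimately show False using cardF by simp
qed

lemma L_add: "L (x + y) = L x + L y"
  by (simp add: linL_def powq_add sum.distrib distrib_left)

lemma L_smul: "l \<in> Fix 2 \<Longrightarrow> L (l * x) = l * L x"
proof -
  assume l: "l \<in> Fix 2"
  have li: "l ^ (q ^ (2 * i)) = l" for i using Fix_iter[OF l, of i] .
  show ?thesis unfolding linL_def sum_distrib_left power_mult_distrib li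
    by (rule sum.cong) (simp_all add: mult_ac)
qed

lemma Ls_add: "Ls (x + y) = Ls x + Ls y"
  by (simp add: linLstar_def powq_add sum.distrib distrib_left)

lemma Ls_smul: "l \<in> Fix 2 \<Longrightarrow> Ls (l * x) = l * Ls x"
proof -
  assume l: "l \<in> Fix 2"
  have li: "l ^ (q ^ (2 * i)) = l" for i using Fix_iter[OF l, of i] .
  have "Ls (l * x) = (\<Sum>i<n. (a i ^ q * x) ^ q ^ (2 * (n - i - 1)) * l ^ q ^ (2 * (n - i - 1)))"
    unfolding linLstar_def by (rule sum.cong) (simp_all add: mult_ac power_mult_distrib)
  also have "\<dots> = l * Ls x" unfolding li linLstar_def sum_distrib_left
    by (rule sum.cong) (simp_all add: mult_ac)
  finally show ?thesis .
qed

lemma sig_K2: "sig u v \<in> Fix 2"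
  by (simp add: sigmaL_def Tr_K2)

lemma T_add: "T (x + y) = T x + T y"
  by (simp add: T_def powq1_add)

lemma K2_pow_q_q: "z \<in> Fix 2 \<Longrightarrow> (z ^ q) ^ q = z"
  by (simp add: Fix_def power_mult[symmetric] power2_eq_square)

lemma T_powq: "z \<in> Fix 2 \<Longrightarrow> T (z ^ q) = T z"
  by (simp add: T_def K2_pow_q_q)

lemma T_K1: "z \<in> Fix 2 \<Longrightarrow> T z \<in> Fix 1"
  by (simp add: T_def Fix_def powq1_add K2_pow_q_q add.commute)

lemma rho_T: "rho u = T (sig u u)"
  by (simp add: rhoL_def T_def)

lemma rho_K1: "rho u \<in> Fix 1"
  unfolding rho_T by (rule T_K1[OF sig_K2])

lemma sig_add1: "sig (u1 + u2) v = sig u1 v + sig u2 v"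
  by (simp add: sigmaL_def distrib_right Tr_add)

lemma sig_add2: "sig u (v1 + v2) = sig u v1 + sig u v2"
  by (simp add: sigmaL_def powq1_add L_add distrib_left Tr_add)

end

context setting
begin

definition FF :: "'a \<Rightarrow> 'a \<Rightarrow> nat \<Rightarrow> nat \<Rightarrow> 'a" where
  "FF w v i k = (a i * w) ^ (q ^ (2 * k + 1)) * v ^ (q ^ (2 * (k + i + 1)))"

lemma FF_period: "FF w v i (k + n) = FF w v i k"
proof -
  have "(a i * w) ^ (q ^ (2 * (k + n) + 1)) = (a i * w) ^ (q ^ (2 * k + 1))"
    using pow_period[of "a i * w" "2 * k + 1"] by (simp add: algebra_simps)
  moreover have "v ^ (q ^ (2 * (k + n + i + 1))) = v ^ (q ^ (2 * (k + i + 1)))"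
    using pow_period[of v "2 * (k + i + 1)"] by (simp add: algebra_simps)
  ultimately show ?thesis by (simp add: FF_def)
qed

lemma termL: "(w * (a i * (v ^ q) ^ (q ^ (2 * i)))) ^ (q ^ (2 * j + 1)) = FF w v i j"
proof -
  have "(v ^ q) ^ (q ^ (2 * i)) = v ^ (q ^ (2 * i + 1))"
    by (simp add: power_mult[symmetric])
  hence "(w * (a i * (v ^ q) ^ (q ^ (2 * i)))) ^ (q ^ (2 * j + 1))
      = (a i * w) ^ (q ^ (2 * j + 1)) * (v ^ (q ^ (2 * i + 1))) ^ (q ^ (2 * j + 1))"
    by (simp add: power_mult_distrib mult_ac)
  also have "(v ^ (q ^ (2 * i + 1))) ^ (q ^ (2 * j + 1)) = v ^ (q ^ (2 * (j + i + 1)))"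
  proof -
    have "(v ^ (q ^ (2 * i + 1))) ^ (q ^ (2 * j + 1)) = v ^ (q ^ ((2 * i + 1) + (2 * j + 1)))"
      by (rule powq_powq)
    moreover have "(2 * i + 1) + (2 * j + 1) = 2 * (j + i + 1)" by simp
    ultimately show ?thesis by metis
  qed
  finally show ?thesis by (simp add: FF_def)
qed

lemma termR:
  assumes "i < n"
  shows "(v * (a i ^ q * w ^ q) ^ (q ^ (2 * (n - i - 1)))) ^ (q ^ (2 * j)) = FF w v i (j + (n - i - 1))"
proof -
  have "a i ^ q * w ^ q = (a i * w) ^ (q ^ 1)" by (simp add: power_mult_distrib)
  hence "(a i ^ q * w ^ q) ^ (q ^ (2 * (n - i - 1))) = (a i * w) ^ (q ^ (1 + 2 * (n - i - 1)))"
    by (simp add: power_mult[symmetric])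
  hence "(v * (a i ^ q * w ^ q) ^ (q ^ (2 * (n - i - 1)))) ^ (q ^ (2 * j))
      = v ^ (q ^ (2 * j)) * ((a i * w) ^ (q ^ (1 + 2 * (n - i - 1)))) ^ (q ^ (2 * j))"
    by (simp add: power_mult_distrib)
  also have "((a i * w) ^ (q ^ (1 + 2 * (n - i - 1)))) ^ (q ^ (2 * j)) = (a i * w) ^ (q ^ (2 * (j + (n - i - 1)) + 1))"
  proof -
    have "((a i * w) ^ (q ^ (1 + 2 * (n - i - 1)))) ^ (q ^ (2 * j)) = (a i * w) ^ (q ^ ((1 + 2 * (n - i - 1)) + 2 * j))"
      by (rule powq_powq)
    moreover have "(1 + 2 * (n - i - 1)) + 2 * j = 2 * (j + (n - i - 1)) + 1" by simp
    ultimately show ?thesis by metis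
  qed
  also have "v ^ (q ^ (2 * j)) = v ^ (q ^ (2 * (j + (n - i - 1) + i + 1)))"
  proof -
    have "2 * (j + (n - i - 1) + i + 1) = 2 * n + 2 * j" using assms by simp
    thus ?thesis using pow_period[of v "2 * j"] by (simp add: add.commute)
  qed
  finally show ?thesis by (simp add: FF_def mult_ac)
qed

lemma ADJ: "(sig w v) ^ q = Tr (v * Ls (w ^ q))"
proof -
  have "(sig w v) ^ q = (\<Sum>j<n. (w * L (v ^ q)) ^ (q ^ (2 * j))) ^ (q ^ 1)"
    by (simp add: sigmaL_def trq2_def)
  also have "\<dots> = (\<Sum>j<n. ((w * L (v ^ q)) ^ (q ^ (2 * j))) ^ (q ^ 1))"
    by (rule powq_sum)
  also have "\<dots> = (\<Sum>j<n. (w * L (v ^ q)) ^ (q ^ (2 * j + 1)))"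
    by (simp only: powq_powq)
  also have "\<dots> = (\<Sum>j<n. \<Sum>i<n. FF w v i j)"
  proof (rule sum.cong[OF refl])
    fix j
    have "(w * L (v ^ q)) ^ (q ^ (2 * j + 1)) = (\<Sum>i<n. w * (a i * (v ^ q) ^ (q ^ (2 * i)))) ^ (q ^ (2 * j + 1))"
      by (simp only: linL_def sum_distrib_left)
    also have "\<dots> = (\<Sum>i<n. (w * (a i * (v ^ q) ^ (q ^ (2 * i)))) ^ (q ^ (2 * j + 1)))"
      by (rule powq_sum)
    also have "\<dots> = (\<Sum>i<n. FF w v i j)" by (simp only: termL)
    finally show "(w * L (v ^ q)) ^ (q ^ (2 * j + 1)) = (\<Sum>i<n. FF w v i j)" .
  qed
  also have "\<dots> = (\<Sum>i<n. \<Sum>j<n. FF w v i j)" by (rule sum.swap)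
  also have "\<dots> = (\<Sum>i<n. \<Sum>j<n. FF w v i (j + (n - i - 1)))"
    by (rule sum.cong[OF refl], rule sum_shift_periodic[symmetric]) (rule FF_period)
  also have "\<dots> = (\<Sum>j<n. \<Sum>i<n. FF w v i (j + (n - i - 1)))" by (rule sum.swap)
  also have "\<dots> = Tr (v * Ls (w ^ q))"
    unfolding trq2_def linLstar_def sum_distrib_left powq_sum
    by (rule sum.cong[OF refl], rule sum.cong[OF refl], rule termR[symmetric], simp)
  finally show ?thesis .
qed

end

context setting
begin

lemma sig_expand: "sig (w + v) (w + v) = sig w w + sig w v + sig v w + sig v v"
  by (simp add: sig_add1 sig_add2 algebra_simps)

lemma Tr_0: "Tr 0 = 0"
  using Tr_add[of 0 0] by (metis add_left_cancel add.right_neutral)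

lemma T_sig_wv: "T (sig w v) = T (Tr (v * Ls (w ^ q)))"
proof -
  have "T (sig w v) = T ((sig w v) ^ q)" by (rule T_powq[symmetric, OF sig_K2])
  thus ?thesis by (simp only: ADJ)
qed

lemma rho_expand: "rho (w + v) - rho w - rho v = T (Tr (v * M (w ^ q)))"
proof -
  have "rho (w + v) = T (sig w w) + T (sig w v) + T (sig v w) + T (sig v v)"
    by (simp add: rho_T sig_expand T_add)
  hence "rho (w + v) - rho w - rho v = T (sig w v) + T (sig v w)"
    by (simp add: rho_T)
  also have "\<dots> = T (Tr (v * Ls (w ^ q))) + T (Tr (v * L (w ^ q)))"
    unfolding T_sig_wv[of w v] by (simp add: sigmaL_def)
  also have "\<dots> = T (Tr (v * M (w ^ q)))"
    by (simp add: T_add Tr_add M_def distrib_left)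
  finally show ?thesis .
qed

lemma rho_diag: "rho w = Tr (w * M (w ^ q))"
  unfolding rhoL_def ADJ by (simp add: sigmaL_def M_def distrib_left Tr_add)

lemma T_nonzero: "\<exists>m\<in>Fix 2. T m \<noteq> 0"
proof (rule ccontr)
  assume "\<not> ?thesis"
  hence sub: "Fix 2 \<subseteq> {x::'a. (\<Sum>j\<in>{0::nat,1}. 1 * x ^ (if j = 0 then q else 1)) = 0}"
    by (auto simp: T_def)
  have "card {x::'a. (\<Sum>j\<in>{0::nat,1}. 1 * x ^ (if j = 0 then q else 1)) = 0} \<le> q"
    by (rule root_bound[where z=0]) (use q2 in \<open>auto simp: inj_on_def\<close>)
  moreover have "card (Fix 2) \<le> card {x::'a. (\<Sum>j\<in>{0::nat,1}. 1 * x ^ (if j = 0 then q else 1)) = 0}"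
    using sub by (intro card_mono) auto
  moreover have "q < q ^ 2" using q2 by (simp add: power2_eq_square)
  ultimately show False using card_K2 by simp
qed

definition Bf :: "'a \<Rightarrow> 'a \<Rightarrow> 'a" where "Bf w v = rho (w + v) - rho w - rho v"

lemma Bf_eq: "Bf w v = T (Tr (v * M (w ^ q)))"
  by (simp add: Bf_def rho_expand)

lemma Bf_K1: "Bf w v \<in> Fix 1"
  unfolding Bf_def by (intro Fix_diff rho_K1)

lemma T_0: "T 0 = 0" using q2 by (simp add: T_def)

lemma Bf_add: "Bf w (x + y) = Bf w x + Bf w y"
  by (simp add: Bf_eq distrib_right Tr_add T_add)

lemma Bf_smul: "l \<in> Fix 1 \<Longrightarrow> Bf w (l * v) = l * Bf w v"
proof -
  assume l: "l \<in> Fix 1"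
  hence l2: "l \<in> Fix 2" using Fix1_sub2 by blast
  have "Bf w (l * v) = T (l * Tr (v * M (w ^ q)))"
    by (simp add: Bf_eq mult.assoc Tr_smul[OF l2])
  also have "\<dots> = l * T (Tr (v * M (w ^ q)))"
    using l by (simp add: T_def Fix_def power_mult_distrib distrib_left)
  finally show ?thesis by (simp add: Bf_eq)
qed

definition R :: "'a set" where "R = {w. M (w ^ q) = 0}"

lemma Bf_R: "w \<in> R \<Longrightarrow> Bf w v = 0"
  by (simp add: R_def Bf_eq T_0 Tr_0)

lemma Bf_notR: "w \<notin> R \<Longrightarrow> \<exists>v. Bf w v \<noteq> 0"
proof -
  assume "w \<notin> R"
  hence z: "M (w ^ q) \<noteq> 0" by (simp add: R_def)
  obtain m where m: "m \<in> Fix 2" "T m \<noteq> 0" using T_nonzero by blast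
  obtain v1 where v1: "Tr v1 \<noteq> 0" using Tr_nonzero by blast
  have mt: "m / Tr v1 \<in> Fix 2" using m Tr_K2 by (intro Fix_divide)
  define v where "v = (m / Tr v1) * v1 / M (w ^ q)"
  have "v * M (w ^ q) = (m / Tr v1) * v1" using z by (simp add: v_def)
  hence "Tr (v * M (w ^ q)) = Tr ((m / Tr v1) * v1)" by simp
  also have "\<dots> = (m / Tr v1) * Tr v1" by (rule Tr_smul[OF mt])
  also have "\<dots> = m" using v1 by simp
  finally have "Bf w v = T m" by (simp add: Bf_eq)
  thus ?thesis using m(2) by (intro exI[of _ v]) simp
qed

lemma rho_R: "w \<in> R \<Longrightarrow> rho w = 0"
  by (simp add: R_def rho_diag Tr_0)

lemma rho_scale:
  assumes l: "l \<in> Fix 2"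
  shows "rho (l * u) = l ^ (q + 1) * rho u"
proof -
  have lq: "l ^ q \<in> Fix 2" using Fix_pow[OF l, of 1] by simp
  have llq: "l * l ^ q \<in> Fix 2" using l lq by (rule Fix_mult)
  have "sig (l * u) (l * u) = Tr ((l * l ^ q) * (u * L (u ^ q)))"
    by (simp add: sigmaL_def power_mult_distrib L_smul[OF lq] mult_ac)
  also have "\<dots> = (l * l ^ q) * sig u u" by (simp add: Tr_smul[OF llq] sigmaL_def)
  finally have s: "sig (l * u) (l * u) = l ^ (q + 1) * sig u u" by (simp add: mult_ac)
  have "(l ^ (q + 1)) ^ q = l ^ (q + 1)"
  proof -
    have "(l * l ^ q) ^ q = l ^ q * (l ^ q) ^ q" by (simp add: power_mult_distrib)
    also have "(l ^ q) ^ q = l" using l by (simp add: K2_pow_q_q)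
    finally show ?thesis by (simp add: mult_ac)
  qed
  thus ?thesis using s by (simp add: rho_T T_def power_mult_distrib distrib_left)
qed

end

context setting
begin

lemma norm_K1: "l \<in> Fix 2 \<Longrightarrow> l ^ (q + 1) \<in> Fix 1"
proof -
  assume l: "l \<in> Fix 2"
  have "(l * l ^ q) ^ q = l ^ q * (l ^ q) ^ q" by (simp add: power_mult_distrib)
  also have "(l ^ q) ^ q = l" using l by (simp add: K2_pow_q_q)
  finally have "(l * l ^ q) ^ q = l * l ^ q" by (simp add: mult_ac)
  thus ?thesis by (simp add: Fix_def)
qed

lemma norm_surj:
  assumes c: "c \<in> Fix 1" "c \<noteq> 0"
  shows "\<exists>l\<in>Fix 2. l ^ (q + 1) = c"
proof -
  define D where "D = Fix 2 - {0}"
  define I where "I = (\<lambda>l. l ^ (q + 1)) ` D"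
  have ID: "I \<subseteq> Fix 1 - {0}" using norm_K1 by (auto simp: I_def D_def)
  have "D \<subseteq> (\<Union>y\<in>I. {x. x ^ (q + 1) = y})" by (auto simp: I_def)
  hence "card D \<le> card (\<Union>y\<in>I. {x. x ^ (q + 1) = y})" by (intro card_mono) auto
  also have "\<dots> \<le> (\<Sum>y\<in>I. card {x. x ^ (q + 1) = y})" by (rule card_UN_le) simp
  also have "\<dots> \<le> card I * (q + 1)"
  proof -
    have b: "card {x::'a. x ^ (q + 1) = y} \<le> q + 1" for y by (rule card_pow_eq1_le) simp
    have "(\<Sum>y\<in>I. card {x::'a. x ^ (q + 1) = y}) \<le> of_nat (card I) * (q + 1)"
      by (rule sum_bounded_above) (rule b)
    thus ?thesis by simp
  qed
  finally have le: "card D \<le> card I * (q + 1)" .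
  have cD: "card D = q ^ 2 - 1" using card_K2 Fix_0 by (simp add: D_def card_Diff_singleton)
  have c1: "card (Fix 1 - {0}) = q - 1" using card_K1 Fix_0 by (simp add: card_Diff_singleton)
  obtain r where r: "q = r + 1" using q2 by (metis add.commute le_add_diff_inverse2 le_trans one_le_numeral)
  have "q ^ 2 - 1 = (q - 1) * (q + 1)" unfolding r by (simp add: power2_eq_square algebra_simps)
  hence "(q - 1) * (q + 1) \<le> card I * (q + 1)" using le cD by simp
  hence "q - 1 \<le> card I" using mult_le_cancel2[of "q - 1" "q + 1" "card I"] by linarith
  hence "I = Fix 1 - {0}" using ID c1 by (intro card_seteq) auto
  hence "c \<in> I" using c by blast
  thus ?thesis by (auto simp: I_def D_def)
qed

definition N :: "'a \<Rightarrow> nat" where "N c = card {u. rho u = c}"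

lemma N_const:
  assumes c: "c \<in> Fix 1" "c \<noteq> 0"
  shows "N c = N 1"
proof -
  obtain l where l: "l \<in> Fix 2" "l ^ (q + 1) = c" using norm_surj[OF c] by blast
  have l0: "l \<noteq> 0" using l c by auto
  have il: "inverse l \<in> Fix 2" using l by (intro Fix_inverse)
  have "bij_betw (\<lambda>u. l * u) {u. rho u = 1} {u. rho u = c}"
  proof (rule bij_betw_byWitness[where f' = "\<lambda>u. inverse l * u"])
    show "\<forall>u\<in>{u. rho u = 1}. inverse l * (l * u) = u" using l0 by simp
    show "\<forall>u\<in>{u. rho u = c}. l * (inverse l * u) = u" using l0 by simp
    show "(\<lambda>u. l * u) ` {u. rho u = 1} \<subseteq> {u. rho u = c}" using l by (auto simp: rho_scale)
    show "(\<lambda>u. inverse l * u) ` {u. rho u = c} \<subseteq> {u. rho u = 1}"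
    proof
      fix x assume "x \<in> (\<lambda>u. inverse l * u) ` {u. rho u = c}"
      then obtain u where u: "rho u = c" "x = inverse l * u" by blast
      have "rho x = (inverse l) ^ (q + 1) * c" using u rho_scale[OF il] by simp
      also have "\<dots> = inverse c * c"
      proof -
        have "(inverse l) ^ (q + 1) = inverse (l ^ (q + 1))" by (rule power_inverse)
        thus ?thesis using l(2) by metis
      qed
      also have "\<dots> = 1" using c by simp
      finally show "x \<in> {u. rho u = 1}" by simp
    qed
  qed
  thus ?thesis unfolding N_def by (metis bij_betw_same_card)
qed

lemma fiber_sum:
  fixes g :: "'a \<Rightarrow> complex"
  assumes g: "(\<Sum>c\<in>Fix 1. g c) = 0"
  shows "(\<Sum>u\<in>UNIV. g (rho u)) = (of_nat (N 0) - of_nat (N 1)) * g 0"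
proof -
  have "(\<Sum>u\<in>UNIV. g (rho u)) = (\<Sum>c\<in>Fix 1. \<Sum>u\<in>{u\<in>UNIV. rho u = c}. g (rho u))"
    by (rule sum.group[symmetric]) (use rho_K1 in auto)
  also have "\<dots> = (\<Sum>c\<in>Fix 1. of_nat (N c) * g c)"
    by (rule sum.cong[OF refl]) (simp add: N_def)
  also have "\<dots> = of_nat (N 0) * g 0 + (\<Sum>c\<in>Fix 1 - {0}. of_nat (N c) * g c)"
    by (rule sum.remove) (simp_all add: Fix_0)
  also have "(\<Sum>c\<in>Fix 1 - {0}. of_nat (N c) * g c) = (\<Sum>c\<in>Fix 1 - {0}. of_nat (N 1) * g c)"
    by (rule sum.cong[OF refl]) (simp add: N_const)
  also have "\<dots> = of_nat (N 1) * (\<Sum>c\<in>Fix 1 - {0}. g c)" by (simp add: sum_distrib_left)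
  also have "(\<Sum>c\<in>Fix 1 - {0}. g c) = - g 0"
  proof -
    have "g 0 + (\<Sum>c\<in>Fix 1 - {0}. g c) = 0" using g sum.remove[of "Fix 1" 0 g] Fix_0 by simp
    thus ?thesis by (metis add.commute eq_neg_iff_add_eq_0)
  qed
  finally show ?thesis by (simp add: algebra_simps)
qed

end

context setting
begin

lemma SL_eq: "SL p e q n a = (\<Sum>u\<in>UNIV. psi p e (rho u))"
  by (simp add: SL_def)

lemma S_val: "(\<Sum>u\<in>UNIV. psi p e (rho u)) = of_nat (N 0) - of_nat (N 1)"
  using fiber_sum[of "psi p e", OF sum_psi_K1] psi_0 by simp

lemma S'_val: "(\<Sum>u\<in>UNIV. psi p e (- rho u)) = of_nat (N 0) - of_nat (N 1)"
proof -
  have "(\<Sum>c\<in>Fix 1. psi p e (- c)) = (\<Sum>c\<in>Fix 1. psi p e c)"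
    by (rule sum.reindex_bij_witness[of _ uminus uminus]) (auto intro: Fix_neg)
  hence "(\<Sum>c\<in>Fix 1. psi p e (- c)) = 0" using sum_psi_K1 by simp
  from fiber_sum[of "\<lambda>c. psi p e (- c)", OF this] show ?thesis using psi_0 by simp
qed

lemma inner_sum: "(\<Sum>v\<in>UNIV. psi p e (Bf w v)) = (if w \<in> R then of_nat (card (UNIV :: 'a set)) else 0)"
proof (cases "w \<in> R")
  case True thus ?thesis by (simp add: Bf_R psi_0)
next
  case False
  have "(\<Sum>v\<in>UNIV. psi p e (Bf w v)) = 0"
    by (rule orth) (use Bf_K1 Bf_add Bf_smul Bf_notR[OF False] in auto)
  thus ?thesis using False by simp
qed

lemma SS': "(\<Sum>u\<in>UNIV. psi p e (rho u)) * (\<Sum>v\<in>UNIV. psi p e (- rho v))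
    = of_nat (card (UNIV :: 'a set)) * of_nat (card R)"
proof -
  have "(\<Sum>u\<in>UNIV. psi p e (rho u)) * (\<Sum>v\<in>UNIV. psi p e (- rho v))
      = (\<Sum>u\<in>UNIV. \<Sum>v\<in>UNIV. psi p e (rho u) * psi p e (- rho v))"
    by (rule sum_product)
  also have "\<dots> = (\<Sum>u\<in>UNIV. \<Sum>v\<in>UNIV. psi p e (rho u - rho v))"
    by (intro sum.cong refl) (simp only: diff_conv_add_uminus psi_add[OF rho_K1 Fix_neg[OF rho_K1]])
  also have "\<dots> = (\<Sum>v\<in>UNIV. \<Sum>u\<in>UNIV. psi p e (rho u - rho v))" by (rule sum.swap)
  also have "\<dots> = (\<Sum>v\<in>UNIV. \<Sum>w\<in>UNIV. psi p e (rho w) * psi p e (Bf w v))"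
  proof (rule sum.cong[OF refl])
    fix v
    have "(\<Sum>u\<in>UNIV. psi p e (rho u - rho v)) = (\<Sum>w\<in>UNIV. psi p e (rho (v + w) - rho v))"
      by (rule sum.reindex_bij_witness[of _ "\<lambda>w. v + w" "\<lambda>u. u - v"]) auto
    also have "\<dots> = (\<Sum>w\<in>UNIV. psi p e (rho w + Bf w v))"
      by (intro sum.cong refl) (simp add: Bf_def add.commute)
    also have "\<dots> = (\<Sum>w\<in>UNIV. psi p e (rho w) * psi p e (Bf w v))"
      by (intro sum.cong refl) (rule psi_add[OF rho_K1 Bf_K1])
    finally show "(\<Sum>u\<in>UNIV. psi p e (rho u - rho v)) = (\<Sum>w\<in>UNIV. psi p e (rho w) * psi p e (Bf w v))" .
  qed
  also have "\<dots> = (\<Sum>w\<in>UNIV. psi p e (rho w) * (\<Sum>v\<in>UNIV. psi p e (Bf w v)))"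
    by (subst sum.swap) (simp add: sum_distrib_left)
  also have "\<dots> = (\<Sum>w\<in>UNIV. if w \<in> R then of_nat (card (UNIV :: 'a set)) else 0)"
    by (intro sum.cong refl) (simp add: inner_sum rho_R psi_0)
  also have "\<dots> = of_nat (card (UNIV :: 'a set)) * of_nat (card R)"
    by (simp add: sum.If_cases)
  finally show ?thesis .
qed

lemma rho_0: "rho 0 = 0"
  by (simp add: rho_diag Tr_0)

lemma U_rho: "l \<in> U \<Longrightarrow> rho (l * u) = rho u"
  using rho_scale[of l u] U_sub by (auto simp: U_def)

lemma dvd_N1: "(q + 1) dvd N 1"
proof -
  have "card U dvd card {u. rho u = 1}"
    by (rule free_action_dvd) (use U_0 U_1 U_mult U_inverse U_rho rho_0 in auto)
  thus ?thesis by (simp add: card_U N_def)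
qed

lemma dvd_N0: "(q + 1) dvd (N 0 - 1)"
proof -
  have "card U dvd card ({u. rho u = 0} - {0})"
    by (rule free_action_dvd) (use U_0 U_1 U_mult U_inverse U_rho rho_0 in auto)
  moreover have "card ({u. rho u = 0} - {0}) = N 0 - 1"
    using rho_0 by (simp add: N_def card_Diff_singleton)
  ultimately show ?thesis by (simp add: card_U)
qed

lemma N0_pos: "N 0 \<ge> 1"
proof -
  have "{0} \<subseteq> {u. rho u = 0}" using rho_0 by auto
  hence "card {0::'a} \<le> N 0" unfolding N_def by (intro card_mono) auto
  thus ?thesis by simp
qed

lemma M_add: "M (x + y) = M x + M y"
  by (simp add: M_def Ls_add L_add)

lemma M_smul: "l \<in> Fix 2 \<Longrightarrow> M (l * x) = l * M x"
  by (simp add: M_def Ls_smul L_smul distrib_left)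

lemma M_0: "M 0 = 0"
  using M_smul[OF Fix_0, of 0] by simp

lemma kerLL_eq: "kerLL q n a = {x. M x = 0}"
  by (simp add: kerLL_def M_def)

lemma card_R: "card R = card (kerLL q n a)"
proof -
  have inj: "inj (\<lambda>w::'a. w ^ q)" using powq_inj[of _ 1 ] by (auto simp: inj_def)
  hence surj: "surj (\<lambda>w::'a. w ^ q)" by (simp add: finite_UNIV_inj_surj)
  have "(\<lambda>w. w ^ q) ` R = kerLL q n a"
  proof
    show "(\<lambda>w. w ^ q) ` R \<subseteq> kerLL q n a" by (auto simp: R_def kerLL_eq)
    show "kerLL q n a \<subseteq> (\<lambda>w. w ^ q) ` R"
    proof
      fix x assume x: "x \<in> kerLL q n a"
      obtain y where "x = y ^ q" using surj by (metis surjD)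
      thus "x \<in> (\<lambda>w. w ^ q) ` R" using x by (auto simp: R_def kerLL_eq)
    qed
  qed
  thus ?thesis using inj by (metis card_image inj_on_subset subset_UNIV)
qed

lemma card_ker_pow: "\<exists>k. card (kerLL q n a) = (q ^ 2) ^ k"
proof -
  have "\<exists>k. card (kerLL q n a) = card (Fix 2) ^ k"
  proof (rule subspace_card_pow)
    show "finite (kerLL q n a)" by simp
    show "ksub (Fix 2) (kerLL q n a)"
      by (auto simp: ksub_def kerLL_eq M_0 M_add M_smul)
  qed (auto intro: Fix_0 Fix_1 Fix_add Fix_mult Fix_neg Fix_inverse)
  thus ?thesis by (simp add: card_K2)
qed

lemma pow_dvd_alt: "(int q + 1) dvd (int q ^ s - (-1) ^ s)"
proof (induction s)
  case (Suc s)
  have "int q ^ Suc s - (-1) ^ Suc s = int q * (int q ^ s - (-1) ^ s) + (-1) ^ s * (int q + 1)"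
    by (simp add: algebra_simps)
  thus ?case using Suc by simp
qed simp

end

context setting
begin

lemma main:
  "SL p e q n a = (-1) ^ (n - dimq2 q (kerLL q n a)) * of_nat (q ^ (2 * n - (n - dimq2 q (kerLL q n a))))"
proof -
  obtain k where ck: "card (kerLL q n a) = (q ^ 2) ^ k" using card_ker_pow by blast
  have "1 < q" using q2 by simp
  hence q21: "1 < q ^ 2" by (intro one_less_power) auto
  have dk: "dimq2 q (kerLL q n a) = k"
    unfolding dimq2_def
  proof (rule the_equality)
    show "card (kerLL q n a) = (q ^ 2) ^ k" by (rule ck)
    fix d assume "card (kerLL q n a) = (q ^ 2) ^ d"
    thus "d = k" using ck q21 by (metis power_inject_exp)
  qed
  have "(q ^ 2) ^ k \<le> (q ^ 2) ^ n"
  proof -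
    have "card (kerLL q n a) \<le> card (UNIV :: 'a set)" by (rule card_mono) auto
    thus ?thesis using ck cardF by (simp add: power_mult)
  qed
  hence kn: "k \<le> n" using q21 by (metis power_le_imp_le_exp)
  define D :: int where "D = int (N 0) - int (N 1)"
  have S: "(\<Sum>u\<in>UNIV. psi p e (rho u)) = of_int D" using S_val by (simp add: D_def)
  have S': "(\<Sum>u\<in>UNIV. psi p e (- rho u)) = of_int D" using S'_val by (simp add: D_def)
  define X :: int where "X = int q ^ (n + k)"
  have "(of_int (D ^ 2) :: complex) = of_int (X ^ 2)"
  proof -
    have "(of_int (D ^ 2) :: complex) = of_nat (card (UNIV :: 'a set)) * of_nat (card R)"
      using SS' S S' by (simp add: power2_eq_square)
    also have "\<dots> = of_nat (q ^ (2 * n) * (q ^ 2) ^ k)" using cardF card_R ck by simp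
    also have "q ^ (2 * n) * (q ^ 2) ^ k = (q ^ (n + k)) ^ 2"
      by (simp add: power_mult[symmetric] power_add[symmetric] algebra_simps)
    finally show ?thesis by (simp add: X_def)
  qed
  hence D2: "D ^ 2 = X ^ 2" by (metis of_int_eq_iff)
  have DX: "D = X \<or> D = - X" using D2 by (simp add: power2_eq_iff)
  have c1: "(int q + 1) dvd (D - 1)"
  proof -
    have "(int q + 1) dvd int (N 0 - 1)" using dvd_N0 by (metis int_dvd_int_iff of_nat_1 of_nat_add)
    moreover have "(int q + 1) dvd int (N 1)" using dvd_N1 by (metis int_dvd_int_iff of_nat_1 of_nat_add)
    ultimately have "(int q + 1) dvd (int (N 0 - 1) - int (N 1))" by (rule dvd_diff)
    thus ?thesis using N0_pos by (simp add: D_def of_nat_diff algebra_simps)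
  qed
  have c2: "(int q + 1) dvd (X - (-1) ^ (n + k))" unfolding X_def by (rule pow_dvd_alt)
  have no2: "\<not> (int q + 1) dvd 2"
  proof
    assume "(int q + 1) dvd 2"
    hence "int q + 1 \<le> 2" by (rule zdvd_imp_le) simp
    thus False using q2 by simp
  qed
  have par: "even (n - k) \<longleftrightarrow> even (n + k)" using kn by auto
  have "D = (-1) ^ (n - k) * X"
  proof (cases "even (n + k)")
    case True
    have "D = X"
    proof (rule ccontr)
      assume "D \<noteq> X"
      hence "D = - X" using DX by blast
      have "(int q + 1) dvd ((D - 1) + (X - 1))" using c1 c2 True by (intro dvd_add) auto
      also have "(D - 1) + (X - 1) = - 2" using \<open>D = - X\<close> by simp
      finally show False using no2 by simp
    qed
    thus ?thesis using True par by simp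
  next
    case False
    have "D = - X"
    proof (rule ccontr)
      assume "D \<noteq> - X"
      hence "D = X" using DX by blast
      have c2': "(int q + 1) dvd (X + 1)" using c2 False by simp
      have "(int q + 1) dvd ((D - 1) - (X + 1))" by (rule dvd_diff[OF c1 c2'])
      also have "(D - 1) - (X + 1) = - 2" using \<open>D = X\<close> by simp
      finally show False using no2 by simp
    qed
    thus ?thesis using False par by simp
  qed
  hence "SL p e q n a = of_int ((-1) ^ (n - k) * X)" using SL_eq S by simp
  also have "\<dots> = (-1) ^ (n - k) * of_nat (q ^ (2 * n - (n - k)))"
  proof -
    have "2 * n - (n - k) = n + k" using kn by simp
    thus ?thesis by (simp add: X_def)
  qed
  finally show ?thesis by (simp add: dk)
qed

end

theorem theorem3p2:
  fixes a :: "nat \<Rightarrow> 'a::{field,finite}"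
    and p e q n :: nat
  assumes "prime p" and "e > 0" and "q = p ^ e"
    and "CHAR('a) = p"
    and "card (UNIV :: 'a set) = q ^ (2 * n)"
    and "n > 0"
  shows "SL p e q n a =
           (-1) ^ (n - dimq2 q (kerLL q n a)) * of_nat (q ^ (2 * n - (n - dimq2 q (kerLL q n a))))"
proof -
  interpret setting p e q n a using assms by unfold_locales auto
  show ?thesis by (rule main)
qed

end
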